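(* Suppose an SCC $F$ is pure-Nash-implemented by $\mathcal M=\langle M,g\rangle$. Let $(i,\theta)\in\mathcal I\times\Theta$ and $m\in PNE^{(\mathcal M,\theta)}$. If $F(\theta)\subseteq\arg\min_{z\in Z^*}u_i^\theta(z)$, $\Xi_i(\theta)\ne\emptyset$, and $Z^*\cap\mathcal L_i^Z(F(\theta),\theta)$ is an $i$-$Z^*$-max set, then $$\bigcup_{m_i'\in M_i}\mathrm{SUPP}[g(m_i',m_{-i})]\subseteq Z^*\cap\mathcal L_i^Z(F(\theta),\theta)\cap\Big(\bigcup_{K\in\Xi_i(\theta)}\bigcap_{\theta'\in K}F(\theta')\Big).$$
   Context: Standing setup: $\mathcal I=\{1,\dots,I\}$ finite, $I\ge 3$; $\Theta$ finite or countably infinite; $Z$ finite; $Y=\Delta(Z)$; $u_i^\theta:Z\to\mathbb R$, $U_i^\theta(y)=\sum_zy_zu_i^\theta(z)$; $\mathcal L_i^Z(\alpha,\theta)=\{z\in Z:U_i^\theta(\alpha)\ge u_i^\theta(z)\}$ and $\mathcal L_i^Z(E,\theta)=\bigcap_{z\in E}\mathcal L_i^Z(z,\theta)$. A mechanism $\mathcal M=\langle M=\times_iM_i,g:M\to Y\rangle$ has countable $M_i$; $PNE^{(\mathcal M,\theta)}$ is the set of pure Nash equilibria at $\theta$. $F$ is pure-Nash-implemented by $\mathcal M$ if $\bigcup_{m\in PNE^{(\mathcal M,\theta)}}\mathrm{SUPP}(g[m])=F(\theta)$ for all $\theta$. A nonempty $E\subseteq Z$ is an $i$-max set if for some $\theta$,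 $E\subseteq\arg\max_{z\in E}u_i^\theta(z)$ and $E\subseteq\arg\max_{z\in Z}u_j^\theta(z)$ for all $j\ne i$. $Z^*=\bigcup_\theta F(\theta)$ if $Z$ is an $i$-max set for some $i$, else $Z^*=Z$. A nonempty $E\subseteq Z^*$ is an $i$-$Z^*$-$\theta$-max set if $E\subseteq\arg\max_{z\in E}u_i^\theta(z)$ and $E\subseteq\arg\max_{z\in Z^*}u_j^\theta(z)$ for all $j\ne i$; $\Lambda^i(E)=\{\theta:E\text{ is an }i\text{-}Z^*\text{-}\theta\text{-max set}\}$ ($=\emptyset$ for $E=\emptyset$); $E$ is an $i$-$Z^*$-max set if $\Lambda^i(E)\ne\emptyset$. $\Theta_i^\theta=\{\theta':F(\theta)\text{ is an }i\text{-}Z^*\text{-}\theta'\text{-max set and }F(\theta)\subseteq F(\theta')\}$; $\Xi_i(\theta)=\{K\subseteq\Theta_i^\theta,K\ne\emptyset:\Theta_i^\theta\cap\Lambda^i(Z^*\cap\mathcal L_i^Z(F(\theta),\theta)\cap\bigcap_{\theta'\in K}F(\theta'))=K\}$. *)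

theory Defs
  imports "HOL-Probability.Probability_Mass_Function"
begin

text \<open>Agents: type 'i (finite); states: type 'th (countable); outcomes: type 'z (finite).
  Lotteries Y = Delta(Z) are represented by 'z pmf; SUPP = set_pmf.
  Preferences: u :: 'i => 'th => 'z => real.\<close>

definition expU :: "('i \<Rightarrow> 'th \<Rightarrow> 'z::finite \<Rightarrow> real) \<Rightarrow> 'i \<Rightarrow> 'th \<Rightarrow> 'z pmf \<Rightarrow> real" where
  "expU u i th y = (\<Sum>z\<in>UNIV. pmf y z * u i th z)"

definition argmax_on :: "('z \<Rightarrow> real) \<Rightarrow> 'z set \<Rightarrow> 'z set" where
  "argmax_on f S = {z \<in> S. \<forall>z'\<in>S. f z' \<le> f z}"

definition argmin_on :: "('z \<Rightarrow> real) \<Rightarrow> 'z set \<Rightarrow> 'z set" where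
  "argmin_on f S = {z \<in> S. \<forall>z'\<in>S. f z \<le> f z'}"

definition lower_contour :: "('i \<Rightarrow> 'th \<Rightarrow> 'z \<Rightarrow> real) \<Rightarrow> 'i \<Rightarrow> 'z \<Rightarrow> 'th \<Rightarrow> 'z set" where
  "lower_contour u i z th = {z'. u i th z \<ge> u i th z'}"

definition lower_contour_set :: "('i \<Rightarrow> 'th \<Rightarrow> 'z \<Rightarrow> real) \<Rightarrow> 'i \<Rightarrow> 'z set \<Rightarrow> 'th \<Rightarrow> 'z set" where
  "lower_contour_set u i E th = (\<Inter>z\<in>E. lower_contour u i z th)"

definition is_SCC :: "('th \<Rightarrow> 'z set) \<Rightarrow> bool" where
  "is_SCC F \<longleftrightarrow> (\<forall>th. F th \<noteq> {})"

definition profiles :: "('i \<Rightarrow> 'm set) \<Rightarrow> ('i \<Rightarrow> 'm) set" where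
  "profiles Msg = {m. \<forall>i. m i \<in> Msg i}"

definition is_mechanism :: "('i \<Rightarrow> 'm set) \<Rightarrow> (('i \<Rightarrow> 'm) \<Rightarrow> 'z pmf) \<Rightarrow> bool" where
  "is_mechanism Msg g \<longleftrightarrow> (\<forall>i. countable (Msg i))"

definition PNE :: "('i \<Rightarrow> 'th \<Rightarrow> 'z::finite \<Rightarrow> real) \<Rightarrow> ('i \<Rightarrow> 'm set) \<Rightarrow> (('i \<Rightarrow> 'm) \<Rightarrow> 'z pmf)
    \<Rightarrow> 'th \<Rightarrow> ('i \<Rightarrow> 'm) set" where
  "PNE u Msg g th = {m \<in> profiles Msg. \<forall>i. \<forall>mi'\<in>Msg i.
      expU u i th (g (m(i := mi'))) \<le> expU u i th (g m)}"

definition pure_Nash_implements :: "('i \<Rightarrow> 'th \<Rightarrow> 'z::finite \<Rightarrow> real) \<Rightarrow> ('th \<Rightarrow> 'z set)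
    \<Rightarrow> ('i \<Rightarrow> 'm set) \<Rightarrow> (('i \<Rightarrow> 'm) \<Rightarrow> 'z pmf) \<Rightarrow> bool" where
  "pure_Nash_implements u F Msg g \<longleftrightarrow>
     is_mechanism Msg g \<and> (\<forall>th. (\<Union>m\<in>PNE u Msg g th. set_pmf (g m)) = F th)"

definition is_i_max_set :: "('i \<Rightarrow> 'th \<Rightarrow> 'z \<Rightarrow> real) \<Rightarrow> 'i \<Rightarrow> 'z set \<Rightarrow> bool" where
  "is_i_max_set u i E \<longleftrightarrow> E \<noteq> {} \<and> (\<exists>th. E \<subseteq> argmax_on (u i th) E \<and>
      (\<forall>j. j \<noteq> i \<longrightarrow> E \<subseteq> argmax_on (u j th) UNIV))"

definition Zstar :: "('i \<Rightarrow> 'th \<Rightarrow> 'z \<Rightarrow> real) \<Rightarrow> ('th \<Rightarrow> 'z set) \<Rightarrow> 'z set" where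
  "Zstar u F = (if \<exists>i. is_i_max_set u i UNIV then (\<Union>th. F th) else UNIV)"

definition is_i_Zstar_th_max_set :: "('i \<Rightarrow> 'th \<Rightarrow> 'z \<Rightarrow> real) \<Rightarrow> ('th \<Rightarrow> 'z set)
    \<Rightarrow> 'i \<Rightarrow> 'z set \<Rightarrow> 'th \<Rightarrow> bool" where
  "is_i_Zstar_th_max_set u F i E th \<longleftrightarrow> E \<noteq> {} \<and> E \<subseteq> Zstar u F \<and>
      E \<subseteq> argmax_on (u i th) E \<and>
      (\<forall>j. j \<noteq> i \<longrightarrow> E \<subseteq> argmax_on (u j th) (Zstar u F))"

definition Lambda :: "('i \<Rightarrow> 'th \<Rightarrow> 'z \<Rightarrow> real) \<Rightarrow> ('th \<Rightarrow> 'z set) \<Rightarrow> 'i \<Rightarrow> 'z set \<Rightarrow> 'th set" where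
  "Lambda u F i E = {th. is_i_Zstar_th_max_set u F i E th}"

definition is_i_Zstar_max_set :: "('i \<Rightarrow> 'th \<Rightarrow> 'z \<Rightarrow> real) \<Rightarrow> ('th \<Rightarrow> 'z set) \<Rightarrow> 'i \<Rightarrow> 'z set \<Rightarrow> bool" where
  "is_i_Zstar_max_set u F i E \<longleftrightarrow> Lambda u F i E \<noteq> {}"

definition Theta_i :: "('i \<Rightarrow> 'th \<Rightarrow> 'z \<Rightarrow> real) \<Rightarrow> ('th \<Rightarrow> 'z set) \<Rightarrow> 'i \<Rightarrow> 'th \<Rightarrow> 'th set" where
  "Theta_i u F i th = {th'. is_i_Zstar_th_max_set u F i (F th) th' \<and> F th \<subseteq> F th'}"

definition Xi :: "('i \<Rightarrow> 'th \<Rightarrow> 'z \<Rightarrow> real) \<Rightarrow> ('th \<Rightarrow> 'z set) \<Rightarrow> 'i \<Rightarrow> 'th \<Rightarrow> 'th set set" where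
  "Xi u F i th = {K. K \<subseteq> Theta_i u F i th \<and> K \<noteq> {} \<and>
      Theta_i u F i th \<inter> Lambda u F i (Zstar u F \<inter> lower_contour_set u i (F th) th \<inter> (\<Inter>th'\<in>K. F th')) = K}"

end

theory Submission
  imports Defs
begin
lemma expU_const:
  fixes u :: "'i \<Rightarrow> 'th \<Rightarrow> 'z::finite \<Rightarrow> real"
  assumes "set_pmf y \<subseteq> S" "\<forall>z\<in>S. u i th z = c"
  shows "expU u i th y = c"
proof -
  have "expU u i th y = (\<Sum>z\<in>UNIV. pmf y z * c)"
    unfolding expU_def
  proof (rule sum.cong)
    fix z :: 'z
    show "pmf y z * u i th z = pmf y z * c"
      using assms by (cases "z \<in> set_pmf y") (auto simp: set_pmf_iff)
  qed simp
  also have "\<dots> = c * (\<Sum>z\<in>UNIV. pmf y z)" by (simp add: sum_distrib_left mult_ac)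
  also have "\<dots> = c" using sum_pmf_eq_1[of UNIV y] by simp
  finally show ?thesis .
qed

lemma expU_le:
  fixes u :: "'i \<Rightarrow> 'th \<Rightarrow> 'z::finite \<Rightarrow> real"
  assumes "set_pmf y \<subseteq> S" "\<forall>z\<in>S. u i th z \<le> c"
  shows "expU u i th y \<le> c"
proof -
  have "expU u i th y \<le> (\<Sum>z\<in>UNIV. pmf y z * c)"
    unfolding expU_def
  proof (rule sum_mono)
    fix z :: 'z
    show "pmf y z * u i th z \<le> pmf y z * c"
      using assms by (cases "z \<in> set_pmf y") (auto simp: set_pmf_iff intro!: mult_left_mono)
  qed
  also have "\<dots> = c * (\<Sum>z\<in>UNIV. pmf y z)" by (simp add: sum_distrib_left mult_ac)
  also have "\<dots> = c" using sum_pmf_eq_1[of UNIV y] by simp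
  finally show ?thesis .
qed

lemma expU_ge_eq:
  fixes u :: "'i \<Rightarrow> 'th \<Rightarrow> 'z::finite \<Rightarrow> real"
  assumes "set_pmf y \<subseteq> S" "\<forall>z\<in>S. c \<le> u i th z" "expU u i th y \<le> c" "z \<in> set_pmf y"
  shows "u i th z = c"
proof -
  have nn: "\<forall>x\<in>UNIV. 0 \<le> pmf y x * (u i th x - c)"
  proof
    fix x :: 'z
    show "0 \<le> pmf y x * (u i th x - c)"
      using assms(1,2) by (cases "x \<in> set_pmf y") (auto simp: set_pmf_iff)
  qed
  have "(\<Sum>x\<in>UNIV. pmf y x * (u i th x - c)) = expU u i th y - c * (\<Sum>x\<in>UNIV. pmf y x)"
    unfolding expU_def by (simp add: algebra_simps sum_subtractf sum_distrib_left)
  also have "\<dots> = expU u i th y - c" using sum_pmf_eq_1[of UNIV y] by simp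
  finally have "(\<Sum>x\<in>UNIV. pmf y x * (u i th x - c)) \<le> 0" using assms(3) by simp
  moreover have "0 \<le> (\<Sum>x\<in>UNIV. pmf y x * (u i th x - c))" by (rule sum_nonneg) (use nn in auto)
  ultimately have "(\<Sum>x\<in>UNIV. pmf y x * (u i th x - c)) = 0" by linarith
  hence "pmf y z * (u i th z - c) = 0" using sum_nonneg_eq_0_iff[of UNIV "\<lambda>x. pmf y x * (u i th x - c)"] nn by simp
  thus ?thesis using pmf_positive[OF assms(4)] by simp
qed

lemma Lambda_anti:
  assumes "th' \<in> Lambda u F i Y" "X \<subseteq> Y" "X \<noteq> {}"
  shows "th' \<in> Lambda u F i X"
  using assms unfolding Lambda_def is_i_Zstar_th_max_set_def argmax_on_def by blast

lemma range_Zstar: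
  fixes u :: "'i \<Rightarrow> 'th \<Rightarrow> 'z::finite \<Rightarrow> real"
  assumes "p \<in> profiles Msg" "pure_Nash_implements u F Msg g"
  shows "set_pmf (g p) \<subseteq> Zstar u F"
proof (cases "\<exists>j. is_i_max_set u j UNIV")
  case False thus ?thesis by (simp add: Zstar_def)
next
  case True
  then obtain j th0 where h: "UNIV \<subseteq> argmax_on (u j th0) UNIV"
    "\<forall>k. k \<noteq> j \<longrightarrow> UNIV \<subseteq> argmax_on (u k th0) UNIV"
    unfolding is_i_max_set_def by blast
  have const: "\<forall>z. u k th0 z = u k th0 z0" for k z0
  proof
    fix z
    have "UNIV \<subseteq> argmax_on (u k th0) UNIV"
      using h by (cases "k = j") auto
    hence "u k th0 z \<le> u k th0 z0" "u k th0 z0 \<le> u k th0 z"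
      unfolding argmax_on_def by blast+
    thus "u k th0 z = u k th0 z0" by simp
  qed
  have ev: "expU u k th0 y = u k th0 undefined" for k y
    by (rule expU_const[of y UNIV]) (use const in auto)
  have "p \<in> PNE u Msg g th0" using assms(1) unfolding PNE_def by (simp add: ev)
  hence "set_pmf (g p) \<subseteq> F th0" using assms(2) unfolding pure_Nash_implements_def by blast
  thus ?thesis using True by (auto simp: Zstar_def)
qed


theorem lemma8:
  fixes u :: "'i::finite \<Rightarrow> 'th::countable \<Rightarrow> 'z::finite \<Rightarrow> real"
    and F :: "'th \<Rightarrow> 'z set"
    and Msg :: "'i \<Rightarrow> 'm set"
    and g :: "('i \<Rightarrow> 'm) \<Rightarrow> 'z pmf"
    and i :: 'i and th :: 'th and m :: "'i \<Rightarrow> 'm"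
  assumes agents: "CARD('i) \<ge> 3"
    and scc: "is_SCC F"
    and impl: "pure_Nash_implements u F Msg g"
    and m_eq: "m \<in> PNE u Msg g th"
    and argmin: "F th \<subseteq> argmin_on (u i th) (Zstar u F)"
    and Xi_ne: "Xi u F i th \<noteq> {}"
    and maxset: "is_i_Zstar_max_set u F i (Zstar u F \<inter> lower_contour_set u i (F th) th)"
  shows "(\<Union>mi'\<in>Msg i. set_pmf (g (m(i := mi'))))
           \<subseteq> Zstar u F \<inter> lower_contour_set u i (F th) th \<inter> (\<Union>K\<in>Xi u F i th. \<Inter>th'\<in>K. F th')"
proof -
  define Zs where "Zs = Zstar u F"
  define E where "E = Zs \<inter> lower_contour_set u i (F th) th"
  define A where "A = (\<Union>mi'\<in>Msg i. set_pmf (g (m(i := mi'))))"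
  define S where "S = Theta_i u F i th"
  have rng: "set_pmf (g p) \<subseteq> Zs" if "p \<in> profiles Msg" for p
    using range_Zstar[OF that impl] Zs_def by simp
  have prof_upd: "m2(j := mi) \<in> profiles Msg" if "m2 \<in> profiles Msg" "mi \<in> Msg j" for m2 j mi
    using that unfolding profiles_def by auto
  have PNE_sub: "set_pmf (g m2) \<subseteq> F t" if "m2 \<in> PNE u Msg g t" for m2 t
    using impl that unfolding pure_Nash_implements_def by blast
  have PNE_prof: "m2 \<in> profiles Msg" if "m2 \<in> PNE u Msg g t" for m2 t
    using that unfolding PNE_def by blast
  have PNE_dev: "expU u j t (g (m2(j := mj))) \<le> expU u j t (g m2)"
    if "m2 \<in> PNE u Msg g t" "mj \<in> Msg j" for m2 t j mj
    using that unfolding PNE_def by blast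
  have FminZ: "w \<in> Zs" if "w \<in> F th" for w
    using argmin that unfolding argmin_on_def Zs_def by auto
  have Fmin: "u i th w \<le> u i th z" if "w \<in> F th" "z \<in> Zs" for w z
    using argmin that unfolding argmin_on_def Zs_def by auto
  have step2: "set_pmf (g (m2(i := mi'))) \<subseteq> E" if "m2 \<in> PNE u Msg g th" "mi' \<in> Msg i" for m2 mi'
  proof
    fix z assume z: "z \<in> set_pmf (g (m2(i := mi')))"
    obtain w0 where w0: "w0 \<in> set_pmf (g m2)" using set_pmf_not_empty[of "g m2"] by blast
    have w0F: "w0 \<in> F th" using w0 PNE_sub[OF that(1)] by blast
    have cF: "\<forall>w\<in>F th. u i th w = u i th w0"
    proof
      fix w assume "w \<in> F th"
      hence "u i th w \<le> u i th w0" "u i th w0 \<le> u i th w"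
        using Fmin[OF \<open>w \<in> F th\<close> FminZ[OF w0F]] Fmin[OF w0F FminZ[OF \<open>w \<in> F th\<close>]] by auto
      thus "u i th w = u i th w0" by simp
    qed
    have e1: "expU u i th (g m2) = u i th w0"
      by (rule expU_const[where u=u and i=i and th=th, OF PNE_sub[OF that(1)] cF])
    have zs: "set_pmf (g (m2(i := mi'))) \<subseteq> Zs" using rng prof_upd PNE_prof that by blast
    have uz: "u i th z = u i th w0"
    proof (rule expU_ge_eq[where u=u and i=i and th=th, OF zs _ _ z])
      show "\<forall>z\<in>Zs. u i th w0 \<le> u i th z" using Fmin[OF w0F] by blast
      show "expU u i th (g (m2(i := mi'))) \<le> u i th w0" using PNE_dev[OF that] e1 by simp
    qed
    show "z \<in> E" unfolding E_def lower_contour_set_def lower_contour_def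
      using zs z uz cF by auto
  qed
  have key: "set_pmf (g (m2(i := mi'))) \<subseteq> F t'"
    if lam: "t' \<in> Lambda u F i X" and m2: "m2 \<in> PNE u Msg g th"
      and devX: "\<forall>mi\<in>Msg i. set_pmf (g (m2(i := mi))) \<subseteq> X" and mi': "mi' \<in> Msg i"
    for t' X m2 mi'
  proof -
    let ?p = "m2(i := mi')"
    have L: "X \<noteq> {}" "X \<subseteq> Zs" "X \<subseteq> argmax_on (u i t') X"
      "\<forall>j. j \<noteq> i \<longrightarrow> X \<subseteq> argmax_on (u j t') Zs"
      using lam unfolding Lambda_def is_i_Zstar_th_max_set_def Zs_def by auto
    obtain x0 where x0: "x0 \<in> set_pmf (g ?p)" using set_pmf_not_empty[of "g ?p"] by blast
    have x0X: "x0 \<in> X" using x0 devX mi' by blast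
    have pp: "?p \<in> profiles Msg" using prof_upd PNE_prof[OF m2] mi' by blast
    have "?p \<in> PNE u Msg g t'"
      unfolding PNE_def
    proof (intro CollectI conjI allI ballI pp)
      fix j mj assume mj: "mj \<in> Msg j"
      show "expU u j t' (g (?p(j := mj))) \<le> expU u j t' (g ?p)"
      proof (cases "j = i")
        case True
        have cX: "\<forall>x\<in>X. u i t' x = u i t' x0"
        proof
          fix x assume x: "x \<in> X"
          have "u i t' x0 \<le> u i t' x" "u i t' x \<le> u i t' x0"
            using L(3) x x0X unfolding argmax_on_def by blast+
          thus "u i t' x = u i t' x0" by simp
        qed
        have "expU u i t' (g (?p(i := mj))) = u i t' x0"
          by (rule expU_const[where u=u and i=i and th=t', OF _ cX]) (use devX mj True in simp)
        moreover have "expU u i t' (g ?p) = u i t' x0"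
          by (rule expU_const[where u=u and i=i and th=t', OF _ cX]) (use devX mi' in simp)
        ultimately show ?thesis using True by simp
      next
        case False
        have am: "X \<subseteq> argmax_on (u j t') Zs" using L(4) False by blast
        have cX: "\<forall>x\<in>X. u j t' x = u j t' x0"
        proof
          fix x assume x: "x \<in> X"
          have "x \<in> Zs" "x0 \<in> Zs" using x x0X L(2) by blast+
          hence "u j t' x0 \<le> u j t' x" "u j t' x \<le> u j t' x0"
            using am x x0X unfolding argmax_on_def by blast+
          thus "u j t' x = u j t' x0" by simp
        qed
        have le: "\<forall>z\<in>Zs. u j t' z \<le> u j t' x0"
          using am x0X unfolding argmax_on_def by blast
        have "expU u j t' (g (?p(j := mj))) \<le> u j t' x0"
          by (rule expU_le[where u=u and i=j and th=t', OF rng[OF prof_upd[OF pp mj]] le])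
        moreover have "expU u j t' (g ?p) = u j t' x0"
          by (rule expU_const[where u=u and i=j and th=t', OF _ cX]) (use devX mi' in simp)
        ultimately show ?thesis by simp
      qed
    qed
    thus ?thesis using PNE_sub by blast
  qed
  have AE: "A \<subseteq> E" unfolding A_def using step2[OF m_eq] by blast
  have mi_in: "m i \<in> Msg i" using PNE_prof[OF m_eq] unfolding profiles_def by blast
  have Ane: "A \<noteq> {}" unfolding A_def using mi_in set_pmf_not_empty[of "g (m(i := m i))"] by blast
  have FthE: "F th \<subseteq> E"
  proof
    fix w assume w: "w \<in> F th"
    show "w \<in> E" unfolding E_def lower_contour_set_def lower_contour_def
      using Fmin FminZ w by auto
  qed
  have Fne: "F th \<noteq> {}" using scc unfolding is_SCC_def by blast
  have keyE: "set_pmf (g (m2(i := mi'))) \<subseteq> F t'"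
    if "t' \<in> Lambda u F i E" "m2 \<in> PNE u Msg g th" "mi' \<in> Msg i" for t' m2 mi'
    by (rule key[OF that(1,2) _ that(3)]) (use step2[OF that(2)] in blast)
  have LS: "Lambda u F i E \<subseteq> S"
  proof
    fix t assume t: "t \<in> Lambda u F i E"
    have "t \<in> Lambda u F i (F th)" using Lambda_anti[OF t FthE Fne] .
    hence 1: "is_i_Zstar_th_max_set u F i (F th) t" unfolding Lambda_def by simp
    have "F th \<subseteq> F t"
    proof
      fix w assume "w \<in> F th"
      then obtain m2 where m2: "m2 \<in> PNE u Msg g th" "w \<in> set_pmf (g m2)"
        using impl unfolding pure_Nash_implements_def by blast
      have "m2 i \<in> Msg i" using PNE_prof[OF m2(1)] unfolding profiles_def by blast
      from keyE[OF t m2(1) this] m2(2) show "w \<in> F t" by auto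
    qed
    with 1 show "t \<in> S" unfolding S_def Theta_i_def by simp
  qed
  define P where "P = {t \<in> S. A \<subseteq> F t}"
  define Phi where "Phi T = S \<inter> Lambda u F i (E \<inter> (\<Inter>t\<in>T. F t))" for T
  have LP: "Lambda u F i E \<subseteq> P"
    using LS keyE[OF _ m_eq] unfolding P_def A_def by blast
  have AX: "A \<subseteq> E \<inter> (\<Inter>t\<in>T. F t)" if "T \<subseteq> P" for T
    using that AE unfolding P_def by blast
  have mono: "Phi T \<subseteq> Phi T'" if "T \<subseteq> T'" "T' \<subseteq> P" for T T'
  proof
    fix t assume "t \<in> Phi T"
    hence t: "t \<in> S" "t \<in> Lambda u F i (E \<inter> (\<Inter>t\<in>T. F t))" unfolding Phi_def by auto
    have "t \<in> Lambda u F i (E \<inter> (\<Inter>t\<in>T'. F t))"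
      by (rule Lambda_anti[OF t(2)]) (use that AX[OF that(2)] Ane in blast)+
    with t show "t \<in> Phi T'" unfolding Phi_def by simp
  qed
  have PhiP: "Phi T \<subseteq> P" if "T \<subseteq> P" for T
  proof
    fix t assume "t \<in> Phi T"
    hence t: "t \<in> S" "t \<in> Lambda u F i (E \<inter> (\<Inter>t\<in>T. F t))" unfolding Phi_def by auto
    have "A \<subseteq> F t" unfolding A_def
      using key[OF t(2) m_eq] AX[OF that] unfolding A_def by blast
    with t show "t \<in> P" unfolding P_def by simp
  qed
  define T1 where "T1 = Lambda u F i E"
  have T1P: "T1 \<subseteq> P" using LP T1_def by simp
  have T1Phi: "T1 \<subseteq> Phi T1"
  proof
    fix t assume t: "t \<in> T1"
    have "t \<in> Lambda u F i (E \<inter> (\<Inter>t\<in>T1. F t))"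
      by (rule Lambda_anti[of t u F i E]) (use t T1_def AX[OF T1P] Ane in blast)+
    with t LS show "t \<in> Phi T1" unfolding Phi_def T1_def by blast
  qed
  have T1ne: "T1 \<noteq> {}" using maxset unfolding is_i_Zstar_max_set_def T1_def E_def Zs_def .
  define G where "G = \<Union>{T. T \<subseteq> P \<and> T \<subseteq> Phi T}"
  have GP: "G \<subseteq> P" unfolding G_def by blast
  have G1: "G \<subseteq> Phi G"
  proof
    fix t assume "t \<in> G"
    then obtain T where T: "T \<subseteq> P" "T \<subseteq> Phi T" "t \<in> T" unfolding G_def by blast
    have "T \<subseteq> G" using T unfolding G_def by blast
    from mono[OF this GP] T show "t \<in> Phi G" by blast
  qed
  have G2: "Phi G \<subseteq> G"
  proof -
    have "Phi G \<subseteq> P" using PhiP[OF GP] .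
    moreover have "Phi G \<subseteq> Phi (Phi G)" using mono[OF G1 \<open>Phi G \<subseteq> P\<close>] .
    ultimately show ?thesis unfolding G_def by blast
  qed
  have Gne: "G \<noteq> {}" using T1ne T1P T1Phi unfolding G_def by blast
  have GS: "G \<subseteq> S" using GP unfolding P_def by blast
  have GXi: "G \<in> Xi u F i th"
    unfolding Xi_def using GS Gne G1 G2
    unfolding Phi_def S_def E_def Zs_def by blast
  have "A \<subseteq> (\<Inter>t\<in>G. F t)" using GP unfolding P_def by blast
  hence "A \<subseteq> (\<Union>K\<in>Xi u F i th. \<Inter>th'\<in>K. F th')" using GXi by blast
  with AE show ?thesis unfolding A_def E_def Zs_def by blast
qed

end
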